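(* Let $k\ge1$ channels and $n>k$ players, each with one packet, under ternary feedback. Under protocol SOP — in every slot $t\ge1$, when $m$ players are pending ($1\le m\le n$), every pending player transmits on each channel with probability $1/\max\{m,k\}$ and stays idle with the remaining probability, independently — the expected finishing time (the first slot by which all players have transmitted successfully) is $O((n-k)/k)$.
   Context: In each slot, a player transmitting alone on a channel succeeds and leaves; two or more players transmitting on the same channel collide and remain pending. Ternary feedback: every pending player knows the current number $m$ of pending players in every slot. *)

theory Defs
  imports "HOL-Probability.Probability"
begin

text \<open>Protocol SOP with k channels (numbered 1..k; choice 0 = stay idle).
  When m players are pending, each pending player independently transmits
  with probability k / max m k, on a uniformly random channel, i.e. on each
  channel with probability 1 / max m k.\<close>

definition sop_choice :: "nat \<Rightarrow> nat \<Rightarrow> nat pmf" where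
  "sop_choice k m =
     bind_pmf (bernoulli_pmf (real k / real (max m k)))
       (\<lambda>b. if b then pmf_of_set {1..k} else return_pmf 0)"

definition sop_remaining :: "nat \<Rightarrow> (nat \<Rightarrow> nat) \<Rightarrow> nat" where
  "sop_remaining m f =
     card {i \<in> {..<m}. f i = 0 \<or> (\<exists>j\<in>{..<m}. j \<noteq> i \<and> f j = f i)}"

definition sop_step :: "nat \<Rightarrow> nat \<Rightarrow> nat pmf" where
  "sop_step k m = map_pmf (sop_remaining m) (Pi_pmf {..<m} 0 (\<lambda>_. sop_choice k m))"

primrec sop_pending :: "nat \<Rightarrow> nat \<Rightarrow> nat \<Rightarrow> nat pmf" where
  "sop_pending k n 0 = return_pmf n"
| "sop_pending k n (Suc t) = bind_pmf (sop_pending k n t) (sop_step k)"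

text \<open>Expected finishing time T = min {t. no player pending after t slots}.
  Since 0 is absorbing, T = #{t \<ge> 0. pending after t slots \<noteq> 0}, hence
  E[T] = sum over t of P(pending after t slots \<noteq> 0) (value in ennreal, may be \<infinity>).\<close>

definition sop_expected_finish :: "nat \<Rightarrow> nat \<Rightarrow> ennreal" where
  "sop_expected_finish k n =
     (\<Sum>t. ennreal (measure_pmf.prob (sop_pending k n t) {m. m \<noteq> 0}))"

end

theory Submission
  imports Defs
begin

lemma pmf_sop_choice:
  assumes "k \<ge> 1" "c \<in> {1..k}"
  shows "pmf (sop_choice k m) c = 1 / real (max m k)"
proof -
  have p: "0 \<le> real k / real (max m k)" "real k / real (max m k) \<le> 1"
    using assms by auto
  show ?thesis using assms
    unfolding sop_choice_def pmf_bind
    by (subst integral_bernoulli_pmf[OF p]) auto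
qed

lemma prob_sop_choice_ne:
  assumes "k \<ge> 1" "c \<in> {1..k}"
  shows "measure_pmf.prob (sop_choice k m) (UNIV - {c}) = 1 - 1 / real (max m k)"
  using measure_pmf.prob_compl[of "{c}" "sop_choice k m"] pmf_sop_choice[OF assms, of m]
  by (simp add: measure_pmf_single)

lemma exp_bound:
  assumes "(M::nat) \<ge> 1"
  shows "exp (-1) \<le> (1 - 1 / real M) ^ (M - 1)"
proof (cases "M = 1")
  case True then show ?thesis by simp
next
  case False
  then have M2: "M \<ge> 2" using assms by auto
  define a where "a = real M - 1"
  have a: "a \<ge> 1" using M2 a_def by simp
  have "real M / a = 1 + 1 / a" using a by (simp add: a_def field_simps)
  then have "real M / a \<le> exp (1 / a)"
    using exp_ge_add_one_self[of "1/a"] by (simp add: add.commute)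
  then have "(real M / a) ^ (M - 1) \<le> exp (1/a) ^ (M - 1)"
    using a by (intro power_mono) auto
  also have "exp (1/a) ^ (M - 1) = exp 1"
    using a M2 by (simp add: exp_of_nat_mult[symmetric] a_def of_nat_diff)
  finally have h: "(real M / a) ^ (M - 1) \<le> exp 1" .
  have e1: "1 - 1 / real M = inverse (real M / a)" using a M2 by (simp add: a_def field_simps)
  have "(1 - 1 / real M) ^ (M - 1) = inverse ((real M / a) ^ (M - 1))"
    unfolding e1 by (rule power_inverse)
  moreover have "exp (-1) = inverse (exp (1::real))" by (rule exp_minus)
  moreover have "0 < (real M / a) ^ (M - 1)" using a M2 by (intro zero_less_power divide_pos_pos) auto
  ultimately show ?thesis using h by (simp add: le_imp_inverse_le)
qed

definition succ_ev :: "nat \<Rightarrow> nat \<Rightarrow> (nat \<Rightarrow> nat) set" where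
  "succ_ev m i = {f. f i \<noteq> 0 \<and> (\<forall>j\<in>{..<m}. j \<noteq> i \<longrightarrow> f j \<noteq> f i)}"

lemma prob_succ:
  assumes k: "k \<ge> 1" and i: "i < m"
  shows "measure_pmf.prob (Pi_pmf {..<m} 0 (\<lambda>_. sop_choice k m)) (succ_ev m i)
     \<ge> real k * (1 / real (max m k)) * (1 - 1 / real (max m k)) ^ (m - 1)"
proof -
  let ?P = "Pi_pmf {..<m} 0 (\<lambda>_. sop_choice k m)"
  let ?M = "real (max m k)"
  define A :: "nat \<Rightarrow> (nat \<Rightarrow> nat) set" where "A c = PiE_dflt {..<m} 0 (\<lambda>j. if j = i then {c} else UNIV - {c})" for c
  have sub: "(\<Union>c\<in>{1..k}. A c) \<subseteq> succ_ev m i"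
  proof
    fix f assume "f \<in> (\<Union>c\<in>{1..k}. A c)"
    then obtain c where c: "c \<in> {1..k}" "f \<in> A c" by blast
    then have "f i = c" "\<forall>j\<in>{..<m}. j \<noteq> i \<longrightarrow> f j \<noteq> c"
      using i unfolding A_def PiE_dflt_def by auto
    then show "f \<in> succ_ev m i" using c(1) unfolding succ_ev_def by auto
  qed
  have disj: "disjoint_family_on A {1..k}"
  proof (unfold disjoint_family_on_def, intro ballI impI)
    fix c d :: nat assume "c \<noteq> d"
    have "f i = c" if "f \<in> A c" for f and c :: nat using i that unfolding A_def PiE_dflt_def by auto
    then show "A c \<inter> A d = {}" using \<open>c \<noteq> d\<close> by blast
  qed
  have eachA: "measure_pmf.prob ?P (A c) = (1 / ?M) * (1 - 1 / ?M) ^ (m - 1)" if c: "c \<in> {1..k}" for c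
  proof -
    have "measure_pmf.prob ?P (A c) =
       (\<Prod>j\<in>{..<m}. measure_pmf.prob (sop_choice k m) (if j = i then {c} else UNIV - {c}))"
      unfolding A_def by (rule measure_Pi_pmf_PiE_dflt) simp
    also have "\<dots> = (\<Prod>j\<in>{..<m}. if j = i then 1 / ?M else 1 - 1 / ?M)"
      by (intro prod.cong refl)
        (auto simp: measure_pmf_single pmf_sop_choice[OF k c] prob_sop_choice_ne[OF k c])
    also have "\<dots> = (1 / ?M) * (\<Prod>j\<in>{..<m} - {i}. if j = i then 1 / ?M else 1 - 1 / ?M)"
      using i by (subst prod.remove[of _ i]) auto
    also have "(\<Prod>j\<in>{..<m} - {i}. if j = i then 1 / ?M else 1 - 1 / ?M)
           = (\<Prod>j\<in>{..<m} - {i}. 1 - 1 / ?M)"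
      by (intro prod.cong) auto
    also have "\<dots> = (1 - 1 / ?M) ^ (m - 1)" using i by simp
    finally show ?thesis .
  qed
  have "measure_pmf.prob ?P (\<Union>c\<in>{1..k}. A c) = (\<Sum>c\<in>{1..k}. measure_pmf.prob ?P (A c))"
    by (rule measure_pmf.finite_measure_finite_Union) (use disj in auto)
  also have "\<dots> = real k * ((1 / ?M) * (1 - 1 / ?M) ^ (m - 1))"
    by (simp add: eachA)
  finally have "measure_pmf.prob ?P (\<Union>c\<in>{1..k}. A c) = real k * ((1 / ?M) * (1 - 1 / ?M) ^ (m - 1))" .
  moreover have "measure_pmf.prob ?P (\<Union>c\<in>{1..k}. A c) \<le> measure_pmf.prob ?P (succ_ev m i)"
    by (rule measure_pmf.finite_measure_mono[OF sub]) simp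
  ultimately show ?thesis unfolding mult.assoc by linarith
qed

lemma set_sop_choice: "k \<ge> 1 \<Longrightarrow> set_pmf (sop_choice k m) \<subseteq> {0..k}"
  unfolding sop_choice_def by (auto simp: set_pmf_of_set split: if_splits)

lemma finite_Pi_sop: "k \<ge> 1 \<Longrightarrow> finite (set_pmf (Pi_pmf {..<m} 0 (\<lambda>_. sop_choice k m)))"
  using set_sop_choice[of k m] by (subst set_Pi_pmf) (auto intro!: finite_PiE_dflt intro: finite_subset)

lemma remaining_eq:
  "real (sop_remaining m f) = real m - (\<Sum>i<m. indicator (succ_ev m i) f)"
proof -
  have e: "{i \<in> {..<m}. f i = 0 \<or> (\<exists>j\<in>{..<m}. j \<noteq> i \<and> f j = f i)}
      = {..<m} - {i \<in> {..<m}. f \<in> succ_ev m i}"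
    by (auto simp: succ_ev_def)
  have "sop_remaining m f = m - card {i \<in> {..<m}. f \<in> succ_ev m i}"
    unfolding sop_remaining_def e by (subst card_Diff_subset) auto
  moreover have "card {i \<in> {..<m}. f \<in> succ_ev m i} \<le> m"
    by (rule order_trans[OF card_mono[of "{..<m}"]]) auto
  moreover have "real (card {i \<in> {..<m}. f \<in> succ_ev m i}) = (\<Sum>i<m. indicator (succ_ev m i) f)"
  proof -
    have "(\<Sum>i<m. indicator (succ_ev m i) f :: real) = (\<Sum>i\<in>{i\<in>{..<m}. f \<in> succ_ev m i}. 1)"
      by (rule sym, subst sum.inter_filter, simp, rule sum.cong, auto simp: indicator_def)
    then show ?thesis using real_of_card[of "{i\<in>{..<m}. f \<in> succ_ev m i}"] by linarith
  qed
  ultimately show ?thesis by (simp add: of_nat_diff)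
qed

lemma remaining_le: "sop_remaining m f \<le> m"
  unfolding sop_remaining_def by (rule order_trans[OF card_mono[of "{..<m}"]]) auto

lemma exp_remaining:
  assumes k: "k \<ge> 1"
  shows "measure_pmf.expectation (sop_step k m) real \<le> real m - real (min m k) / exp 1"
proof -
  let ?P = "Pi_pmf {..<m} 0 (\<lambda>_. sop_choice k m)"
  let ?M = "real (max m k)"
  have int: "integrable (measure_pmf ?P) g" for g :: "_ \<Rightarrow> real"
    by (rule integrable_measure_pmf_finite[OF finite_Pi_sop[OF k]])
  have "measure_pmf.expectation (sop_step k m) real
      = measure_pmf.expectation ?P (\<lambda>f. real m - (\<Sum>i<m. indicator (succ_ev m i) f))"
    unfolding sop_step_def by (simp add: remaining_eq)
  also have "\<dots> = real m - (\<Sum>i<m. measure_pmf.prob ?P (succ_ev m i))"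
    by (subst Bochner_Integration.integral_diff[OF int int]) (simp add: Bochner_Integration.integral_sum[OF int])
  also have "\<dots> \<le> real m - (\<Sum>i<m. real k * (1 / ?M) * (1 - 1 / ?M) ^ (m - 1))"
    using prob_succ[OF k] by (intro diff_left_mono sum_mono) auto
  also have "(\<Sum>i<m. real k * (1 / ?M) * (1 - 1 / ?M) ^ (m - 1))
      = real (min m k) * (1 - 1 / ?M) ^ (m - 1)"
  proof -
    have "real m * real k = real (min m k) * ?M"
      by (simp add: min_def max_def)
    then show ?thesis using k by (simp add: field_simps)
  qed
  also have "real m - real (min m k) * (1 - 1 / ?M) ^ (m - 1) \<le> real m - real (min m k) / exp 1"
  proof -
    have "exp (-1) \<le> (1 - 1 / ?M) ^ (max m k - 1)" using exp_bound[of "max m k"] k by simp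
    also have "\<dots> \<le> (1 - 1 / ?M) ^ (m - 1)"
      using k by (intro power_decreasing) (auto simp: field_simps)
    finally have "exp (-1) \<le> (1 - 1 / ?M) ^ (m - 1)" .
    then have "real (min m k) * exp (-1) \<le> real (min m k) * (1 - 1 / ?M) ^ (m - 1)"
      by (intro mult_left_mono) auto
    then show ?thesis by (simp add: exp_minus field_simps)
  qed
  finally show ?thesis .
qed

definition phi :: "nat \<Rightarrow> nat \<Rightarrow> real" where
  "phi k m = exp 1 * (real m / real k + real (min m k))"

lemma finite_step: "k \<ge> 1 \<Longrightarrow> finite (set_pmf (sop_step k m))"
  unfolding sop_step_def using finite_Pi_sop[of k m] by simp

lemma step_zero: "sop_step k 0 = return_pmf 0"
  unfolding sop_step_def sop_remaining_def by simp

lemma phi_drift: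
  assumes k: "k \<ge> 1" and m: "m \<ge> 1"
  shows "measure_pmf.expectation (sop_step k m) (phi k) + 1 \<le> phi k m"
proof -
  let ?S = "sop_step k m"
  let ?E = "measure_pmf.expectation ?S real"
  have int: "integrable (measure_pmf ?S) g" for g :: "nat \<Rightarrow> real"
    by (rule integrable_measure_pmf_finite[OF finite_step[OF k]])
  have ER: "?E \<le> real m - real (min m k) / exp 1" by (rule exp_remaining[OF k])
  have kpos: "real k > 0" using k by simp
  show ?thesis
  proof (cases "m \<ge> k")
    case True
    have "measure_pmf.expectation ?S (phi k) \<le> measure_pmf.expectation ?S (\<lambda>y. (exp 1 / real k) * real y + exp 1 * real k)"
      by (intro integral_mono int) (auto simp: phi_def field_simps)
    also have "\<dots> = (exp 1 / real k) * ?E + exp 1 * real k"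
      by (simp add: Bochner_Integration.integral_add[OF int int])
    also have "\<dots> \<le> (exp 1 / real k) * (real m - real k / exp 1) + exp 1 * real k"
    proof -
      have mk: "min m k = k" using True by simp
      show ?thesis using ER[unfolded mk] kpos by (intro add_right_mono mult_left_mono) auto
    qed
    also have "\<dots> = phi k m - 1"
      using True kpos by (simp add: phi_def field_simps min_def)
    finally show ?thesis by simp
  next
    case False
    have "measure_pmf.expectation ?S (phi k) \<le> measure_pmf.expectation ?S (\<lambda>y. (exp 1 * (1 / real k + 1)) * real y)"
      by (intro integral_mono int) (auto simp: phi_def field_simps)
    also have "\<dots> = (exp 1 * (1 / real k + 1)) * ?E"
      by simp
    also have "\<dots> \<le> (exp 1 * (1 / real k + 1)) * (real m - real m / exp 1)"
      using ER False kpos by (intro mult_left_mono) (auto simp: min_def)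
    also have "\<dots> = phi k m - (1 / real k + 1) * real m"
      using False kpos by (simp add: phi_def field_simps min_def)
    also have "\<dots> \<le> phi k m - 1"
    proof -
      have "1 \<le> (1 / real k + 1) * real m" using m kpos
        by (metis add.commute le_add_same_cancel1 mult_cancel_right1 mult_mono' of_nat_1 of_nat_mono
            zero_le_divide_1_iff zero_le_one of_nat_0_le_iff)
      then show ?thesis by simp
    qed
    finally show ?thesis by simp
  qed
qed

lemma phi_nonneg: "phi k m \<ge> 0"
  unfolding phi_def by simp

lemma phi_drift_enn:
  assumes k: "k \<ge> 1"
  shows "(\<integral>\<^sup>+y. ennreal (phi k y) \<partial>sop_step k m) + indicator {x. x \<noteq> 0} m \<le> ennreal (phi k m)"
proof (cases "m = 0")
  case True
  then show ?thesis by (simp add: step_zero)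
next
  case False
  have "(\<integral>\<^sup>+y. ennreal (phi k y) \<partial>sop_step k m) = ennreal (measure_pmf.expectation (sop_step k m) (phi k))"
    by (rule nn_integral_eq_integral[OF integrable_measure_pmf_finite[OF finite_step[OF k]]])
      (simp add: phi_nonneg)
  moreover have "measure_pmf.expectation (sop_step k m) (phi k) + 1 \<le> phi k m"
    using phi_drift[OF k] False by simp
  moreover have "measure_pmf.expectation (sop_step k m) (phi k) \<ge> 0"
    by (simp add: phi_nonneg)
  ultimately show ?thesis using False
  proof -
    assume e: "(\<integral>\<^sup>+y. ennreal (phi k y) \<partial>sop_step k m) = ennreal (measure_pmf.expectation (sop_step k m) (phi k))"
      and l: "measure_pmf.expectation (sop_step k m) (phi k) + 1 \<le> phi k m"
      and n: "measure_pmf.expectation (sop_step k m) (phi k) \<ge> 0"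
    have "ennreal (measure_pmf.expectation (sop_step k m) (phi k)) + 1
       = ennreal (measure_pmf.expectation (sop_step k m) (phi k) + 1)"
      using n by (subst ennreal_plus) auto
    also have "\<dots> \<le> ennreal (phi k m)" using l by (rule ennreal_leI)
    finally show ?thesis using e False by simp
  qed
qed

lemma one_step:
  assumes k: "k \<ge> 1"
  shows "emeasure (measure_pmf p) {x. x \<noteq> 0} + (\<integral>\<^sup>+y. ennreal (phi k y) \<partial>bind_pmf p (sop_step k))
     \<le> (\<integral>\<^sup>+y. ennreal (phi k y) \<partial>p)"
proof -
  have "emeasure (measure_pmf p) {x. x \<noteq> 0} = (\<integral>\<^sup>+x. indicator {x. x \<noteq> 0} x \<partial>p)"
    by (rule nn_integral_indicator[symmetric]) simp
  then have "emeasure (measure_pmf p) {x. x \<noteq> 0} + (\<integral>\<^sup>+y. ennreal (phi k y) \<partial>bind_pmf p (sop_step k))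
     = (\<integral>\<^sup>+x. indicator {x. x \<noteq> 0} x \<partial>p) + (\<integral>\<^sup>+x. (\<integral>\<^sup>+y. ennreal (phi k y) \<partial>sop_step k x) \<partial>p)"
    by simp
  also have "\<dots> = (\<integral>\<^sup>+x. indicator {x. x \<noteq> 0} x + (\<integral>\<^sup>+y. ennreal (phi k y) \<partial>sop_step k x) \<partial>p)"
    by (rule nn_integral_add[symmetric]) simp_all
  also have "\<dots> \<le> (\<integral>\<^sup>+y. ennreal (phi k y) \<partial>p)"
    by (intro nn_integral_mono) (use phi_drift_enn[OF k] in \<open>simp add: add.commute\<close>)
  finally show ?thesis .
qed

lemma chain:
  assumes k: "k \<ge> 1"
  shows "(\<Sum>t<T. emeasure (measure_pmf (sop_pending k n t)) {x. x \<noteq> 0})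
      + (\<integral>\<^sup>+y. ennreal (phi k y) \<partial>sop_pending k n T) \<le> ennreal (phi k n)"
proof (induction T)
  case 0
  then show ?case by simp
next
  case (Suc T)
  have "(\<Sum>t<Suc T. emeasure (measure_pmf (sop_pending k n t)) {x. x \<noteq> 0})
      + (\<integral>\<^sup>+y. ennreal (phi k y) \<partial>sop_pending k n (Suc T))
    = (\<Sum>t<T. emeasure (measure_pmf (sop_pending k n t)) {x. x \<noteq> 0})
      + (emeasure (measure_pmf (sop_pending k n T)) {x. x \<noteq> 0}
         + (\<integral>\<^sup>+y. ennreal (phi k y) \<partial>bind_pmf (sop_pending k n T) (sop_step k)))"
    by (simp add: add.assoc)
  also have "\<dots> \<le> (\<Sum>t<T. emeasure (measure_pmf (sop_pending k n t)) {x. x \<noteq> 0})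
      + (\<integral>\<^sup>+y. ennreal (phi k y) \<partial>sop_pending k n T)"
    by (rule add_left_mono[OF one_step[OF k]])
  also have "\<dots> \<le> ennreal (phi k n)" by (rule Suc.IH)
  finally show ?case .
qed

lemma finish_le:
  assumes k: "k \<ge> 1"
  shows "sop_expected_finish k n \<le> ennreal (phi k n)"
proof -
  have "sop_expected_finish k n = (\<Sum>t. emeasure (measure_pmf (sop_pending k n t)) {x. x \<noteq> 0})"
    unfolding sop_expected_finish_def by (simp add: measure_pmf.emeasure_eq_measure)
  also have "\<dots> \<le> ennreal (phi k n)"
  proof (rule suminf_le_const)
    show "summable (\<lambda>t. emeasure (measure_pmf (sop_pending k n t)) {x. x \<noteq> 0})" by simp
    fix T
    show "(\<Sum>t<T. emeasure (measure_pmf (sop_pending k n t)) {x. x \<noteq> 0}) \<le> ennreal (phi k n)"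
      by (rule order_trans[OF add_increasing2[OF zero_le order_refl] chain[OF k, where T=T and n=n]])
  qed
  finally show ?thesis .
qed

theorem lemma9:
  shows "\<exists>C::real. C > 0 \<and>
    (\<forall>k::nat. k \<ge> 1 \<longrightarrow> (\<exists>N::nat. \<forall>n::nat. n \<ge> N \<and> n > k \<longrightarrow>
        sop_expected_finish k n \<le> ennreal (C * (real n - real k) / real k)))"
proof (intro exI[of _ "4 * exp 1"] conjI allI impI)
  show "0 < 4 * exp (1::real)" by simp
  fix k :: nat assume k: "k \<ge> 1"
  show "\<exists>N. \<forall>n. N \<le> n \<and> k < n \<longrightarrow> sop_expected_finish k n \<le> ennreal (4 * exp 1 * (real n - real k) / real k)"
  proof (intro exI[of _ "2 * k + k * k"] allI impI)
    fix n assume n: "2 * k + k * k \<le> n \<and> k < n"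
    have kp: "real k > 0" using k by simp
    have n1: "real n \<ge> 2 * real k" using n by linarith
    have n2: "real n \<ge> real k * real k"
    proof -
      have "k * k \<le> n" using n by linarith
      then show ?thesis by (metis of_nat_le_iff of_nat_mult)
    qed
    have "phi k n \<le> exp 1 * (real n / real k + real k)"
      unfolding phi_def by (intro mult_left_mono add_left_mono) auto
    also have "\<dots> \<le> 4 * exp 1 * (real n - real k) / real k"
    proof -
      have "real k \<le> real n / real k" using n2 kp by (simp add: field_simps)
      then have "real n / real k + real k \<le> 2 * (real n / real k)" by simp
      also have "\<dots> \<le> 4 * ((real n - real k) / real k)"
        using n1 kp by (simp add: field_simps)
      finally have "real n / real k + real k \<le> 4 * ((real n - real k) / real k)" .
      then have "exp 1 * (real n / real k + real k) \<le> exp 1 * (4 * ((real n - real k) / real k))"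
        by (intro mult_left_mono) auto
      then show ?thesis by (simp add: field_simps)
    qed
    finally have "phi k n \<le> 4 * exp 1 * (real n - real k) / real k" .
    then show "sop_expected_finish k n \<le> ennreal (4 * exp 1 * (real n - real k) / real k)"
      using finish_le[OF k, of n] by (meson ennreal_leI order_trans)
  qed
qed

end
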